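(* Let $n\ge1$ and let $\mathcal{A}\subset[0,1]^n$ be Lebesgue measurable with $\mathrm{vol}[\mathcal{A}]>0$. For $p\ge0$ let $d_p$ be the distance $d_p(x,y)=\|x-y\|_p$, where $\|z\|_p=(\sum_i|z_i|^p)^{1/p}$ for $p>0$ and $\|z\|_0=\#\{i: z_i\ne0\}$. For $\epsilon\ge0$ let $\mathcal{A}(\epsilon,d_p)=\{x\in[0,1]^n: d_p(x,y)\le\epsilon\text{ for some }y\in\mathcal{A}\}$. Then $$\mathrm{vol}[\mathcal{A}(\epsilon,d_p)]\ge1-\frac{\exp(-\epsilon^{2p}/n)}{\mathrm{vol}[\mathcal{A}]}\quad\text{for }p>0,$$ and $$\mathrm{vol}[\mathcal{A}(\epsilon,d_0)]\ge1-\frac{\exp(-\epsilon^{2}/n)}{\mathrm{vol}[\mathcal{A}]}\quad\text{for }p=0.$$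
   Context: $\mathrm{vol}$ denotes $n$-dimensional Lebesgue measure. *)

theory Defs
  imports "HOL-Analysis.Analysis"
begin

definition unit_cube :: "(real ^ 'n) set" where
  "unit_cube = {x. \<forall>i. 0 \<le> x $ i \<and> x $ i \<le> 1}"

definition pnorm :: "real \<Rightarrow> real ^ 'n \<Rightarrow> real" where
  "pnorm p z = (if p = 0 then real (card {i. z $ i \<noteq> 0})
                else (\<Sum>i\<in>UNIV. \<bar>z $ i\<bar> powr p) powr (1 / p))"

definition dist_p :: "real \<Rightarrow> real ^ 'n \<Rightarrow> real ^ 'n \<Rightarrow> real" where
  "dist_p p x y = pnorm p (x - y)"

definition expansion :: "(real ^ 'n) set \<Rightarrow> real \<Rightarrow> real \<Rightarrow> (real ^ 'n) set" where
  "expansion A eps p = {x \<in> unit_cube. \<exists>y\<in>A. dist_p p x y \<le> eps}"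

end

theory Submission
  imports Defs "HOL-Probability.Hoeffding"
begin

definition UU :: "real measure" where "UU = density lborel (indicator {0..1})"

lemma space_UU[simp]: "space UU = UNIV" and sets_UU[simp]: "sets UU = sets borel"
  by (auto simp: UU_def)

lemma emeasure_UU: "A \<in> sets borel \<Longrightarrow> emeasure UU A = emeasure lborel (A \<inter> {0..1})"
proof -
  assume A: "A \<in> sets borel"
  have "emeasure UU A = (\<integral>\<^sup>+x. indicator {0..1} x * indicator A x \<partial>lborel)"
    unfolding UU_def using A by (subst emeasure_density) auto
  also have "\<dots> = (\<integral>\<^sup>+x. indicator (A \<inter> {0..1}) x \<partial>lborel)"
    by (intro nn_integral_cong) (auto simp: indicator_def)
  also have "\<dots> = emeasure lborel (A \<inter> {0..1})"
    using A by (intro nn_integral_indicator) auto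
  finally show ?thesis .
qed

lemma prob_UU: "prob_space UU"
  by (rule prob_spaceI) (simp add: emeasure_UU)
lemma psf: "product_sigma_finite (\<lambda>_. UU)"
  by (rule product_sigma_finite.intro, rule prob_space_imp_sigma_finite, rule prob_UU)

definition upd :: "real^'n \<Rightarrow> 'n set \<Rightarrow> ('n \<Rightarrow> real) \<Rightarrow> real^'n" where
  "upd x J f = (\<chi> j. if j \<in> J then f j else x $ j)"

definition vupd :: "real^'n \<Rightarrow> 'n \<Rightarrow> real \<Rightarrow> real^'n" where
  "vupd x i t = (\<chi> j. if j = i then t else x $ j)"

definition TT :: "(real^'n) set \<Rightarrow> 'n set \<Rightarrow> (real^'n) set" where
  "TT K S = {z. \<exists>y\<in>K. \<forall>j. j \<notin> S \<longrightarrow> y $ j = z $ j}"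

definition GG :: "real \<Rightarrow> (real^'n) set \<Rightarrow> 'n set \<Rightarrow> real^'n \<Rightarrow> ennreal" where
  "GG l K J z = (INF S\<in>Pow J. if z \<in> TT K S then ennreal (exp (l * real (card S))) else \<infinity>)"

definition fib :: "(real^'n) set \<Rightarrow> real^'n \<Rightarrow> 'n set \<Rightarrow> ('n \<Rightarrow> real) set" where
  "fib K x J = {f \<in> space (PiM J (\<lambda>_. UU)). upd x J f \<in> K}"

definition prS :: "'n set \<Rightarrow> real^'n \<Rightarrow> real^'n" where
  "prS S z = (\<chi> j. (if j \<in> S then 0 else 1) * z $ j)"

lemma continuous_prS: "continuous_on UNIV (prS S)"
  unfolding prS_def by (intro continuous_on_vec_lambda continuous_on_mult_left continuous_on_component continuous_on_id)

lemma TT_eq: "TT K S = prS S -` (prS S ` K)"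
proof (intro set_eqI iffI)
  fix z assume "z \<in> TT K S"
  then obtain y where "y \<in> K" "\<forall>j. j \<notin> S \<longrightarrow> y $ j = z $ j" unfolding TT_def by blast
  then have "prS S z = prS S y" unfolding prS_def by (simp add: vec_eq_iff)
  with \<open>y \<in> K\<close> show "z \<in> prS S -` (prS S ` K)" by auto
next
  fix z assume "z \<in> prS S -` (prS S ` K)"
  then obtain y where "y \<in> K" "prS S z = prS S y" by auto
  have "\<forall>j. j \<notin> S \<longrightarrow> y $ j = z $ j"
  proof (intro allI impI)
    fix j assume "j \<notin> S"
    from \<open>prS S z = prS S y\<close> have "prS S z $ j = prS S y $ j" by simp
    with \<open>j \<notin> S\<close> show "y $ j = z $ j" by (simp add: prS_def)
  qed
  with \<open>y \<in> K\<close> show "z \<in> TT K S" unfolding TT_def by blast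
qed

lemma closed_TT: "compact K \<Longrightarrow> closed (TT K S)"
  unfolding TT_eq
  apply (rule continuous_closed_vimage)
   apply (intro compact_imp_closed compact_continuous_image continuous_on_subset[OF continuous_prS]; simp)
  using continuous_prS continuous_on_eq_continuous_at open_UNIV by blast

lemma GG_measurable[measurable]: "compact K \<Longrightarrow> finite J \<Longrightarrow> GG l K J \<in> borel_measurable borel"
  unfolding GG_def
  apply (rule borel_measurable_INF)
  using closed_TT by (auto intro!: measurable_If_set borel_closed countable_finite)

lemma upd_measurable[measurable]: "upd x J \<in> borel_measurable (PiM J (\<lambda>_. UU))"
  unfolding upd_def
  apply (subst borel_measurable_euclidean_space)
  apply (auto simp: Basis_vec_def cart_eq_inner_axis[symmetric])
  subgoal for j
  proof (cases "j \<in> J")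
    case True
    have "(\<lambda>f. f j) \<in> measurable (PiM J (\<lambda>_. UU)) UU" by (rule measurable_component_singleton) fact
    then show ?thesis using True by (simp add: measurable_cong_sets[OF refl sets_UU])
  qed simp
  done

lemma prob_PJ: "prob_space (PiM J (\<lambda>_. UU))"
  by (rule prob_space_PiM) (rule prob_UU)

lemma fib_eq: "fib K x J = upd x J -` K \<inter> space (PiM J (\<lambda>_. UU))"
  by (auto simp: fib_def)

lemma sets_fib: "closed K \<Longrightarrow> fib K x J \<in> sets (PiM J (\<lambda>_. UU))"
  unfolding fib_eq by (rule measurable_sets[OF upd_measurable]) (rule borel_closed)

lemma upd_insert: "i \<notin> J \<Longrightarrow> upd x (insert i J) (f(i:=t)) = upd (vupd x i t) J f"
  by (auto simp: upd_def vupd_def vec_eq_iff)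

lemma space_upd: "f \<in> space (PiM J (\<lambda>_. UU)) \<Longrightarrow> i \<notin> J \<Longrightarrow> f(i:=t) \<in> space (PiM (insert i J) (\<lambda>_. UU))"
  by (auto simp: space_PiM PiE_iff extensional_def)

lemma AE_UU: "AE t in UU. t \<in> {0..1}"
  unfolding UU_def by (subst AE_density) (auto simp: indicator_def)

lemma real_key:
  fixes C \<beta> a E :: real
  assumes "0 \<le> C" "0 < \<beta>" "0 \<le> a" "a \<le> \<beta>" "0 < E"
  shows "(0 < a \<and> C / a \<le> C/\<beta>*(1+E-E*a/\<beta>)) \<or> E*C/\<beta> \<le> C/\<beta>*(1+E-E*a/\<beta>)"
proof (cases "E * a \<le> \<beta>")
  case True
  have "E \<le> 1+E-E*a/\<beta>" using True assms by (simp add: field_simps)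
  then have "C/\<beta>*E \<le> C/\<beta>*(1+E-E*a/\<beta>)" using assms by (intro mult_left_mono) auto
  then show ?thesis by (simp add: field_simps)
next
  case False
  then have a: "0 < a" using assms by (cases "a = 0") auto
  define g where "g = a / \<beta>"
  have g: "0 < g" "g \<le> 1" "1 < E * g" using a assms False by (auto simp: g_def field_simps)
  have "0 \<le> (1 - g) * (E * g - 1)" using g by auto
  then have "1 \<le> g * (1 + E - E * g)" by (simp add: algebra_simps)
  then have "1 / g \<le> 1 + E - E * g" using g by (simp add: field_simps)
  then have "C/\<beta> * (1/g) \<le> C/\<beta> * (1 + E - E * g)" using assms by (intro mult_left_mono) auto
  moreover have "C / a = C/\<beta> * (1/g)" using a assms by (simp add: g_def)
  ultimately show ?thesis using a by (simp add: g_def)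
qed

lemma real_final:
  fixes C \<beta> \<mu> E :: real
  assumes "0 \<le> C" "0 < \<beta>" "0 < \<mu>" "0 < E"
  shows "C/\<beta>*(1+E) - C*E/\<beta>^2 * \<mu> \<le> (1+E)^2/(4*E) * C / \<mu>"
proof -
  define m where "m = \<mu> / \<beta>"
  have m: "0 < m" using assms by (simp add: m_def)
  have "0 \<le> (2*E*m - (1+E))^2" by simp
  then have "4*E*((1+E)*m - E*m^2) \<le> (1+E)^2" by (simp add: power2_eq_square algebra_simps)
  then have "(1+E)*m - E*m^2 \<le> (1+E)^2/(4*E)" using assms by (simp add: field_simps)
  then have "C * ((1+E)*m - E*m^2) \<le> C * ((1+E)^2/(4*E))" using assms by (intro mult_left_mono) auto
  moreover have "C/\<beta>*(1+E) - C*E/\<beta>^2 * \<mu> = C * ((1+E)*m - E*m^2) / \<mu>"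
    using assms by (simp add: m_def field_simps power2_eq_square)
  ultimately have "C/\<beta>*(1+E) - C*E/\<beta>^2 * \<mu> \<le> C * ((1+E)^2/(4*E)) / \<mu>"
    using assms by (metis divide_right_mono less_le)
  then show ?thesis by (simp add: mult.commute)
qed


definition Kp :: "(real^'n) set \<Rightarrow> 'n \<Rightarrow> (real^'n) set" where
  "Kp K i = (\<lambda>p. vupd (fst p) i (snd p)) ` (K \<times> {0..1})"

lemma continuous_vupd: "continuous_on UNIV (\<lambda>p::(real^'n) \<times> real. vupd (fst p) i (snd p))"
  unfolding vupd_def
proof (intro continuous_on_vec_lambda)
  fix j
  show "continuous_on UNIV (\<lambda>p::(real^'n) \<times> real. if j = i then snd p else fst p $ j)"
    by (cases "j = i") (auto intro!: continuous_intros)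
qed

lemma compact_Kp: "compact K \<Longrightarrow> compact (Kp K i)"
  unfolding Kp_def
  by (intro compact_continuous_image compact_Times continuous_on_subset[OF continuous_vupd]) auto

lemma Kp_cube: "K \<subseteq> unit_cube \<Longrightarrow> Kp K i \<subseteq> unit_cube"
  unfolding Kp_def unit_cube_def vupd_def by auto

lemma K_sub_Kp: "K \<subseteq> unit_cube \<Longrightarrow> K \<subseteq> Kp K i"
proof
  fix y assume "K \<subseteq> unit_cube" "y \<in> K"
  then have "(y, y $ i) \<in> K \<times> {0..1}" by (auto simp: unit_cube_def)
  moreover have "y = vupd y i (y $ i)" by (auto simp: vupd_def vec_eq_iff)
  ultimately show "y \<in> Kp K i" unfolding Kp_def by force
qed

lemma mem_Kp: "t \<in> {0..1} \<Longrightarrow> vupd w i t \<in> Kp K i \<longleftrightarrow> (\<exists>y\<in>K. \<forall>j. j \<noteq> i \<longrightarrow> y $ j = w $ j)"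
proof
  assume "vupd w i t \<in> Kp K i"
  then obtain y s where "y \<in> K" "vupd w i t = vupd y i s" unfolding Kp_def by auto
  have "\<forall>j. j \<noteq> i \<longrightarrow> y $ j = w $ j"
  proof (intro allI impI)
    fix j assume "j \<noteq> i"
    from \<open>vupd w i t = vupd y i s\<close> have "vupd w i t $ j = vupd y i s $ j" by simp
    with \<open>j \<noteq> i\<close> show "y $ j = w $ j" by (simp add: vupd_def)
  qed
  with \<open>y \<in> K\<close> show "\<exists>y\<in>K. \<forall>j. j \<noteq> i \<longrightarrow> y $ j = w $ j" by blast
next
  assume t: "t \<in> {0..1}" and "\<exists>y\<in>K. \<forall>j. j \<noteq> i \<longrightarrow> y $ j = w $ j"
  then obtain y where "y \<in> K" "\<forall>j. j \<noteq> i \<longrightarrow> y $ j = w $ j" by blast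
  then have "vupd w i t = vupd y i t" by (auto simp: vupd_def vec_eq_iff)
  with \<open>y \<in> K\<close> t show "vupd w i t \<in> Kp K i" unfolding Kp_def by force
qed

lemma upd_vupd: "i \<notin> J \<Longrightarrow> upd (vupd x i t) J f = vupd (upd x J f) i t"
  by (auto simp: upd_def vupd_def vec_eq_iff)

lemma fib_Kp: "i \<notin> J \<Longrightarrow> t \<in> {0..1} \<Longrightarrow> fib (Kp K i) (vupd x i t) J = fib (Kp K i) (vupd x i 0) J"
proof -
  assume i: "i \<notin> J" and t: "t \<in> {0..1}"
  have A: "vupd w i t \<in> Kp K i \<longleftrightarrow> vupd w i 0 \<in> Kp K i" for w
    using mem_Kp[OF t, of w i K] mem_Kp[of 0 w i K] by simp
  show ?thesis unfolding fib_def using A i by (simp add: upd_vupd)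
qed

lemma TT_Kp: "z \<in> TT (Kp K i) S \<Longrightarrow> z \<in> TT K (insert i S)"
proof -
  assume "z \<in> TT (Kp K i) S"
  then obtain y' where "y' \<in> Kp K i" "\<forall>j. j \<notin> S \<longrightarrow> y' $ j = z $ j" unfolding TT_def by blast
  moreover from \<open>y' \<in> Kp K i\<close> obtain y s where "y \<in> K" "y' = vupd y i s" unfolding Kp_def by auto
  ultimately have yz: "\<forall>j. j \<notin> S \<longrightarrow> vupd y i s $ j = z $ j" by simp
  have "\<forall>j. j \<notin> insert i S \<longrightarrow> y $ j = z $ j"
  proof (intro allI impI)
    fix j assume j: "j \<notin> insert i S"
    then have "vupd y i s $ j = z $ j" using yz by simp
    moreover have "vupd y i s $ j = y $ j" using j by (simp add: vupd_def)
    ultimately show "y $ j = z $ j" by simp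
  qed
  with \<open>y \<in> K\<close> show ?thesis unfolding TT_def by blast
qed

lemma GG_mono: "J \<subseteq> J' \<Longrightarrow> GG l K J' z \<le> GG l K J z"
  unfolding GG_def by (rule INF_superset_mono) auto

lemma GG_empty: "GG l K {} z = (if z \<in> K then 1 else \<infinity>)"
proof -
  have "z \<in> TT K {} \<longleftrightarrow> z \<in> K" unfolding TT_def by (simp add: vec_eq_iff[symmetric])
  then show ?thesis unfolding GG_def by simp
qed

lemma GG_step:
  assumes "finite J" "i \<notin> J"
  shows "GG l K (insert i J) z \<le> ennreal (exp l) * GG l (Kp K i) J z"
proof -
  define h where "h S = (if z \<in> TT (Kp K i) S then ennreal (exp (l * real (card S))) else \<infinity>)" for S
  have fin: "finite (h ` Pow J)" "h ` Pow J \<noteq> {}" using assms by auto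
  have "GG l (Kp K i) J z = Inf (h ` Pow J)" unfolding GG_def h_def by simp
  also have "\<dots> = Min (h ` Pow J)" using Min_Inf[OF fin] by simp
  finally obtain S where S: "S \<in> Pow J" "GG l (Kp K i) J z = h S" using Min_in[OF fin] by auto
  show ?thesis
  proof (cases "z \<in> TT (Kp K i) S")
    case True
    have iS: "i \<notin> S" "finite S" using S assms by (auto intro: finite_subset)
    have "GG l K (insert i J) z \<le> (if z \<in> TT K (insert i S) then ennreal (exp (l * real (card (insert i S)))) else \<infinity>)"
      unfolding GG_def by (rule INF_lower) (use S in auto)
    also have "\<dots> = ennreal (exp (l * real (card (insert i S))))" using TT_Kp[OF True] by simp
    also have "\<dots> = ennreal (exp l) * ennreal (exp (l * real (card S)))"
      using iS by (simp add: ennreal_mult[symmetric] mult_exp_exp algebra_simps)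
    also have "\<dots> = ennreal (exp l) * GG l (Kp K i) J z" using S True by (simp add: h_def)
    finally show ?thesis .
  next
    case False
    then have "GG l (Kp K i) J z = \<infinity>" using S by (simp add: h_def)
    then show ?thesis by (simp add: ennreal_mult_top)
  qed
qed


abbreviation PJ :: "'n set \<Rightarrow> ('n \<Rightarrow> real) measure" where "PJ J \<equiv> PiM J (\<lambda>_. UU)"

definition cc :: "real \<Rightarrow> real" where "cc l = (1 + exp l)^2 / (4 * exp l)"

lemma cc_nonneg: "0 \<le> cc l" by (simp add: cc_def)

lemma claim:
  fixes l :: real and J :: "'n::finite set"
  assumes "finite J"
  shows "\<forall>(K::(real^'n) set) x. compact K \<longrightarrow> K \<subseteq> unit_cube \<longrightarrow> 0 < measure (PJ J) (fib K x J) \<longrightarrow>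
     (\<integral>\<^sup>+f. GG l K J (upd x J f) \<partial>PJ J) \<le> ennreal (cc l ^ card J / measure (PJ J) (fib K x J))"
  using assms
proof (induction J rule: finite_induct)
  case empty
  show ?case
  proof (intro allI impI)
    fix K :: "(real^'n) set" and x
    assume K: "compact K" "K \<subseteq> unit_cube" and pos: "0 < measure (PJ {}) (fib K x {})"
    have upd0: "upd x {} f = x" for f by (simp add: upd_def)
    have "x \<in> K"
    proof (rule ccontr)
      assume "x \<notin> K" then have "fib K x {} = {}" by (simp add: fib_def upd0)
      with pos show False by simp
    qed
    then have fib1: "fib K x {} = space (PJ {})" by (auto simp: fib_def upd0)
    have "measure (PJ {}) (fib K x {}) = 1" unfolding fib1 by (rule prob_space.prob_space[OF prob_PJ])
    moreover have "(\<integral>\<^sup>+f. GG l K {} (upd x {} f) \<partial>PJ {}) = 1"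
      by (simp add: PiM_empty upd0 GG_empty \<open>x \<in> K\<close> nn_integral_count_space_finite)
    ultimately show "(\<integral>\<^sup>+f. GG l K {} (upd x {} f) \<partial>PJ {}) \<le> ennreal (cc l ^ card {} / measure (PJ {}) (fib K x {}))"
      by simp
  qed
next
  case (insert i J)
  show ?case
  proof (intro allI impI)
    fix K :: "(real^'n) set" and x
    assume K: "compact K" "K \<subseteq> unit_cube" and pos: "0 < measure (PJ (insert i J)) (fib K x (insert i J))"
    define C where "C = cc l ^ card J"
    define E where "E = exp l"
    define a where "a t = measure (PJ J) (fib K (vupd x i t) J)" for t
    define \<beta> where "\<beta> = measure (PJ J) (fib (Kp K i) (vupd x i 0) J)"
    define \<mu> where "\<mu> = measure (PJ (insert i J)) (fib K x (insert i J))"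
    interpret UU: prob_space UU by (rule prob_UU)
    interpret PJ: prob_space "PJ J" by (rule prob_PJ)
    interpret PJ': prob_space "PJ (insert i J)" by (rule prob_PJ)
    have psfJ: "sigma_finite_measure (PJ J)" by (rule prob_space_imp_sigma_finite[OF prob_PJ])
    have Kc: "closed K" using K compact_imp_closed by blast
    have K': "compact (Kp K i)" "Kp K i \<subseteq> unit_cube" using compact_Kp[OF K(1)] Kp_cube[OF K(2)] by auto
    have C_nn: "0 \<le> C" by (simp add: C_def cc_nonneg)
    have E_pos: "0 < E" by (simp add: E_def)
    have upd_meas: "(\<lambda>p. (snd p) (i := fst p)) \<in> measurable (UU \<Otimes>\<^sub>M PJ J) (PJ (insert i J))"
      by (rule measurable_fun_upd[where J=J]) auto
    have meas_ind: "(\<lambda>(t,f). indicator (fib K x (insert i J)) (f(i:=t)) :: ennreal) \<in> borel_measurable (UU \<Otimes>\<^sub>M PJ J)"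
      using measurable_compose[OF upd_meas borel_measurable_indicator[OF sets_fib[OF Kc]]]
      by (simp add: case_prod_beta')
    have A_eq: "emeasure (PJ J) (fib K (vupd x i t) J) = (\<integral>\<^sup>+f. indicator (fib K x (insert i J)) (f(i:=t)) \<partial>PJ J)" for t
    proof -
      have "emeasure (PJ J) (fib K (vupd x i t) J) = (\<integral>\<^sup>+f. indicator (fib K (vupd x i t) J) f \<partial>PJ J)"
        by (rule nn_integral_indicator[symmetric]) (rule sets_fib[OF Kc])
      also have "\<dots> = (\<integral>\<^sup>+f. indicator (fib K x (insert i J)) (f(i:=t)) \<partial>PJ J)"
        by (rule nn_integral_cong) (simp add: indicator_def fib_def space_upd upd_insert insert.hyps)
      finally show ?thesis .
    qed
    have a_meas: "a \<in> borel_measurable UU"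
    proof -
      have "(\<lambda>t. \<integral>\<^sup>+f. indicator (fib K x (insert i J)) (f(i:=t)) \<partial>PJ J) \<in> borel_measurable UU"
        using sigma_finite_measure.borel_measurable_nn_integral[OF psfJ, of "\<lambda>t f. indicator (fib K x (insert i J)) (f(i:=t))"] meas_ind
        by simp
      then have "(\<lambda>t. enn2real (emeasure (PJ J) (fib K (vupd x i t) J))) \<in> borel_measurable UU"
        unfolding A_eq by measurable
      then show ?thesis unfolding a_def measure_def .
    qed
    have emeas_eq: "emeasure (PJ (insert i J)) (fib K x (insert i J)) = (\<integral>\<^sup>+t. emeasure (PJ J) (fib K (vupd x i t) J) \<partial>UU)"
    proof -
      have "emeasure (PJ (insert i J)) (fib K x (insert i J)) = (\<integral>\<^sup>+f. indicator (fib K x (insert i J)) f \<partial>PJ (insert i J))"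
        by (rule nn_integral_indicator[symmetric]) (rule sets_fib[OF Kc])
      also have "\<dots> = (\<integral>\<^sup>+t. (\<integral>\<^sup>+f. indicator (fib K x (insert i J)) (f(i:=t)) \<partial>PJ J) \<partial>UU)"
        by (rule product_sigma_finite.product_nn_integral_insert_rev[OF psf insert.hyps(1,2)])
           (rule borel_measurable_indicator[OF sets_fib[OF Kc]])
      finally show ?thesis by (simp add: A_eq)
    qed
    have a_nn: "0 \<le> a t" for t by (simp add: a_def)
    have a_le1: "a t \<le> 1" for t unfolding a_def by (rule PJ.prob_le_1)
    have a_int: "integrable UU a"
      by (rule UU.integrable_const_bound[where B=1]) (use a_nn a_le1 a_meas in auto)
    have a_le: "a t \<le> \<beta>" if t: "t \<in> {0..1}" for t
    proof -
      have "fib K (vupd x i t) J \<subseteq> fib (Kp K i) (vupd x i t) J"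
        using K_sub_Kp[OF K(2)] by (auto simp: fib_def)
      also have "\<dots> = fib (Kp K i) (vupd x i 0) J" by (rule fib_Kp[OF insert.hyps(2) t])
      finally show ?thesis unfolding a_def \<beta>_def
        by (intro PJ.finite_measure_mono sets_fib compact_imp_closed K')
    qed
    have \<mu>_eq: "\<mu> = integral\<^sup>L UU a"
    proof -
      have "ennreal \<mu> = (\<integral>\<^sup>+t. ennreal (a t) \<partial>UU)"
        unfolding \<mu>_def a_def using emeas_eq by (simp add: PJ.emeasure_eq_measure PJ'.emeasure_eq_measure)
      also have "\<dots> = ennreal (integral\<^sup>L UU a)"
        by (rule nn_integral_eq_integral[OF a_int]) (simp add: a_nn)
      finally show ?thesis using a_nn by (simp add: \<mu>_def integral_nonneg)
    qed
    have \<mu>_pos: "0 < \<mu>" using pos by (simp add: \<mu>_def)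
    have \<beta>_pos: "0 < \<beta>"
    proof (rule ccontr)
      assume "\<not> 0 < \<beta>"
      have "AE t in UU. a t = 0" using AE_UU
      proof (rule eventually_mono)
        fix t :: real assume "t \<in> {0..1}"
        then have "a t \<le> \<beta>" by (rule a_le)
        then show "a t = 0" using a_nn[of t] \<open>\<not> 0 < \<beta>\<close> by linarith
      qed
      then have "integral\<^sup>L UU a = integral\<^sup>L UU (\<lambda>_. 0)" by (intro integral_cong_AE a_meas) auto
      then show False using \<mu>_eq \<mu>_pos by simp
    qed
    define \<psi> where "\<psi> t = C/\<beta>*(1+E) - C*E/\<beta>^2 * a t" for t
    have \<psi>_int: "integrable UU \<psi>" unfolding \<psi>_def using a_int by auto
    have \<psi>_nn: "AE t in UU. 0 \<le> \<psi> t"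
      using AE_UU
    proof (rule eventually_mono)
      fix t :: real assume t: "t \<in> {0..1}"
      have "C*E/\<beta>^2 * a t \<le> C*E/\<beta>^2 * \<beta>" using a_le[OF t] C_nn E_pos \<beta>_pos by (intro mult_left_mono) auto
      also have "\<dots> = C/\<beta>*E" using \<beta>_pos by (simp add: power2_eq_square)
      also have "\<dots> \<le> C/\<beta>*(1+E)" using C_nn \<beta>_pos by (intro mult_left_mono) auto
      finally show "0 \<le> \<psi> t" by (simp add: \<psi>_def)
    qed
    let ?F = "\<lambda>f. GG l K (insert i J) (upd x (insert i J) f)"
    have F_meas: "?F \<in> borel_measurable (PJ (insert i J))"
      by (rule measurable_compose[OF upd_measurable GG_measurable[OF K(1)]]) (simp add: insert.hyps)
    have "(\<integral>\<^sup>+f. ?F f \<partial>PJ (insert i J)) = (\<integral>\<^sup>+t. (\<integral>\<^sup>+f. ?F (f(i:=t)) \<partial>PJ J) \<partial>UU)"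
      by (rule product_sigma_finite.product_nn_integral_insert_rev[OF psf insert.hyps(1,2) F_meas])
    also have "\<dots> \<le> (\<integral>\<^sup>+t. ennreal (\<psi> t) \<partial>UU)"
    proof (rule nn_integral_mono_AE)
      show "AE t in UU. (\<integral>\<^sup>+f. ?F (f(i:=t)) \<partial>PJ J) \<le> ennreal (\<psi> t)"
        using AE_UU
      proof (rule eventually_mono)
        fix t :: real assume t: "t \<in> {0..1}"
        have inner_eq: "(\<integral>\<^sup>+f. ?F (f(i:=t)) \<partial>PJ J) = (\<integral>\<^sup>+f. GG l K (insert i J) (upd (vupd x i t) J f) \<partial>PJ J)"
          by (simp add: upd_insert insert.hyps)
        have fibK': "measure (PJ J) (fib (Kp K i) (vupd x i t) J) = \<beta>"
          unfolding \<beta>_def using fib_Kp[OF insert.hyps(2) t] by simp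
        have b1: "(\<integral>\<^sup>+f. GG l K (insert i J) (upd (vupd x i t) J f) \<partial>PJ J) \<le> ennreal (E*C/\<beta>)"
        proof -
          have "(\<integral>\<^sup>+f. GG l K (insert i J) (upd (vupd x i t) J f) \<partial>PJ J)
                \<le> (\<integral>\<^sup>+f. ennreal E * GG l (Kp K i) J (upd (vupd x i t) J f) \<partial>PJ J)"
            by (rule nn_integral_mono) (simp add: E_def GG_step insert.hyps)
          also have "\<dots> = ennreal E * (\<integral>\<^sup>+f. GG l (Kp K i) J (upd (vupd x i t) J f) \<partial>PJ J)"
            by (rule nn_integral_cmult) (rule measurable_compose[OF upd_measurable GG_measurable[OF K'(1) insert.hyps(1)]])
          also have "\<dots> \<le> ennreal E * ennreal (C/\<beta>)"
            using insert.IH K' fibK' \<beta>_pos by (intro mult_left_mono) (auto simp: C_def)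
          also have "\<dots> = ennreal (E*(C/\<beta>))" using E_pos C_nn \<beta>_pos by (subst ennreal_mult) auto
          also have "E*(C/\<beta>) = E*C/\<beta>" by simp
          finally show ?thesis .
        qed
        have b2: "(\<integral>\<^sup>+f. GG l K (insert i J) (upd (vupd x i t) J f) \<partial>PJ J) \<le> ennreal (C/a t)" if "0 < a t"
        proof -
          have "(\<integral>\<^sup>+f. GG l K (insert i J) (upd (vupd x i t) J f) \<partial>PJ J)
                \<le> (\<integral>\<^sup>+f. GG l K J (upd (vupd x i t) J f) \<partial>PJ J)"
            by (rule nn_integral_mono) (rule GG_mono, auto)
          also have "\<dots> \<le> ennreal (C/a t)"
            using insert.IH K that by (auto simp: C_def a_def)
          finally show ?thesis .
        qed
        have eq\<psi>: "C/\<beta>*(1+E-E*a t/\<beta>) = \<psi> t"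
          using \<beta>_pos by (simp add: \<psi>_def field_simps power2_eq_square)
        from real_key[OF C_nn \<beta>_pos a_nn a_le[OF t] E_pos]
        show "(\<integral>\<^sup>+f. ?F (f(i:=t)) \<partial>PJ J) \<le> ennreal (\<psi> t)"
        proof
          assume "0 < a t \<and> C / a t \<le> C/\<beta>*(1+E-E*a t/\<beta>)"
          then show ?thesis unfolding inner_eq using b2 eq\<psi> by (metis ennreal_leI order_trans)
        next
          assume "E*C/\<beta> \<le> C/\<beta>*(1+E-E*a t/\<beta>)"
          then show ?thesis unfolding inner_eq using b1 eq\<psi> by (metis ennreal_leI order_trans)
        qed
      qed
    qed
    also have "\<dots> = ennreal (integral\<^sup>L UU \<psi>)"
      by (rule nn_integral_eq_integral[OF \<psi>_int \<psi>_nn])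
    also have "integral\<^sup>L UU \<psi> = C/\<beta>*(1+E) - C*E/\<beta>^2 * \<mu>"
    proof -
      have "measure UU UNIV = 1" using UU.prob_space by simp
      then show ?thesis unfolding \<psi>_def \<mu>_eq using a_int by simp
    qed
    also have "C/\<beta>*(1+E) - C*E/\<beta>^2 * \<mu> \<le> cc l * C / \<mu>"
      using real_final[OF C_nn \<beta>_pos \<mu>_pos E_pos] by (simp add: cc_def E_def)
    also have "cc l * C = cc l ^ card (insert i J)" using insert.hyps by (simp add: C_def)
    finally show "(\<integral>\<^sup>+f. ?F f \<partial>PJ (insert i J)) \<le> ennreal (cc l ^ card (insert i J) / measure (PJ (insert i J)) (fib K x (insert i J)))"
      by (simp add: \<mu>_def ennreal_leI)
  qed
qed


lemma upd_measurable_gen: "sets M = sets borel \<Longrightarrow> upd x J \<in> borel_measurable (PiM J (\<lambda>_. M))"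
  unfolding upd_def
  apply (subst borel_measurable_euclidean_space)
  apply (auto simp: Basis_vec_def cart_eq_inner_axis[symmetric])
  subgoal for j
  proof (cases "j \<in> J")
    case True
    assume M: "sets M = sets borel"
    have "(\<lambda>f. f j) \<in> measurable (PiM J (\<lambda>_. M)) M" by (rule measurable_component_singleton) fact
    then show ?thesis using True by (simp add: measurable_cong_sets[OF refl M])
  qed simp
  done

lemma psf_lborel: "product_sigma_finite (\<lambda>_. lborel :: real measure)"
  by (rule product_sigma_finite.intro, rule sigma_finite_lborel)

lemma lborel_vec: "distr (PiM UNIV (\<lambda>_::'n. lborel)) borel (upd x UNIV) = (lborel :: (real^'n::finite) measure)"
proof (rule lborel_eqI[symmetric])
  fix l u :: "real^'n" assume lu: "\<And>b. b \<in> Basis \<Longrightarrow> l \<bullet> b \<le> u \<bullet> b"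
  have lu': "l $ j \<le> u $ j" for j using lu[of "axis j 1"] by (simp add: Basis_vec_def cart_eq_inner_axis) blast
  have meas: "upd x UNIV \<in> borel_measurable (PiM UNIV (\<lambda>_::'n. lborel))" by (rule upd_measurable_gen) simp
  have pre: "upd x UNIV -` box l u \<inter> space (PiM UNIV (\<lambda>_::'n. lborel)) = PiE UNIV (\<lambda>j. {l$j<..<u$j})"
    by (auto simp: space_PiM upd_def mem_box_cart PiE_iff)
  have "emeasure (distr (PiM UNIV (\<lambda>_::'n. lborel)) borel (upd x UNIV)) (box l u)
      = emeasure (PiM UNIV (\<lambda>_::'n. lborel)) (PiE UNIV (\<lambda>j. {l$j<..<u$j}))"
    by (subst emeasure_distr[OF meas]) (simp_all add: pre)
  also have "\<dots> = (\<Prod>j\<in>UNIV. emeasure lborel {l$j<..<u$j})"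
    by (rule product_sigma_finite.emeasure_PiM[OF psf_lborel]) auto
  also have "\<dots> = (\<Prod>j\<in>UNIV. ennreal (u$j - l$j))" using lu' by simp
  also have "\<dots> = ennreal (\<Prod>j\<in>UNIV. u$j - l$j)" using lu' by (intro prod_ennreal) simp
  also have "(\<Prod>j\<in>UNIV. u$j - l$j) = measure lborel (cbox l u)"
    using lu' by (subst content_cbox_cart) (auto simp: interval_ne_empty_cart)
  also have "measure lborel (cbox l u) = (\<Prod>b\<in>Basis. (u - l) \<bullet> b)"
    using lu by (simp add: content_cbox inner_diff_left)
  finally show "emeasure (distr (PiM UNIV (\<lambda>_::'n. lborel)) borel (upd x UNIV)) (box l u) = ennreal (\<Prod>b\<in>Basis. (u - l) \<bullet> b)" .
qed simp


lemma h_meas: "(\<lambda>f. \<Prod>j\<in>UNIV. indicator {0..1::real} (f j) :: ennreal) \<in> borel_measurable (PiM (UNIV::'n::finite set) (\<lambda>_. lborel))"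
  by (intro borel_measurable_prod_ennreal measurable_comp[OF measurable_component_singleton, unfolded comp_def]) auto

lemma PiM_UU: "PJ (UNIV::'n::finite set) = density (PiM UNIV (\<lambda>_. lborel)) (\<lambda>f. \<Prod>j\<in>UNIV. indicator {0..1::real} (f j))"
proof (rule product_sigma_finite.PiM_eqI[OF psf, symmetric])
  show "finite (UNIV::'n set)" by simp
  show "sets (density (PiM UNIV (\<lambda>_. lborel)) (\<lambda>f. \<Prod>j\<in>UNIV. indicator {0..1::real} (f j))) = sets (PJ (UNIV::'n set))"
    unfolding sets_density by (rule sets_PiM_cong) simp_all
next
  fix A :: "'n \<Rightarrow> real set" assume A: "\<And>i. i \<in> UNIV \<Longrightarrow> A i \<in> sets UU"
  let ?L = "PiM UNIV (\<lambda>_::'n. lborel)"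
  have Ab: "A i \<in> sets borel" for i using A by simp
  have PiEs: "PiE UNIV A \<in> sets ?L" by (rule sets_PiM_I_finite) (auto simp: Ab)
  have "emeasure (density ?L (\<lambda>f. \<Prod>j\<in>UNIV. indicator {0..1::real} (f j))) (PiE UNIV A)
      = (\<integral>\<^sup>+f. (\<Prod>j\<in>UNIV. indicator {0..1::real} (f j)) * indicator (PiE UNIV A) f \<partial>?L)"
    by (rule emeasure_density[OF h_meas PiEs])
  also have "\<dots> = (\<integral>\<^sup>+f. (\<Prod>j\<in>UNIV. indicator {0..1::real} (f j) * indicator (A j) (f j)) \<partial>?L)"
  proof (rule nn_integral_cong)
    fix f :: "'n \<Rightarrow> real"
    show "(\<Prod>j\<in>UNIV. indicator {0..1::real} (f j)) * indicator (PiE UNIV A) f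
        = (\<Prod>j\<in>UNIV. indicator {0..1::real} (f j) * indicator (A j) (f j) :: ennreal)"
    proof (cases "\<forall>j. f j \<in> A j")
      case True
      then have "f \<in> PiE UNIV A" by (auto simp: PiE_iff)
      then show ?thesis using True by simp
    next
      case False
      then obtain j where "f j \<notin> A j" by blast
      then have "f \<notin> PiE UNIV A" by (auto simp: PiE_iff)
      moreover have "(\<Prod>j\<in>UNIV. indicator {0..1::real} (f j) * indicator (A j) (f j) :: ennreal) = 0"
      proof (rule prod_zero)
        show "\<exists>a\<in>UNIV. indicator {0..1::real} (f a) * indicator (A a) (f a) = (0::ennreal)"
          using \<open>f j \<notin> A j\<close> by (intro bexI[of _ j]) auto
      qed simp
      ultimately show ?thesis by simp
    qed
  qed
  also have "\<dots> = (\<Prod>j\<in>UNIV. (\<integral>\<^sup>+x. indicator {0..1::real} x * indicator (A j) x \<partial>lborel))"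
    by (rule product_sigma_finite.product_nn_integral_prod[OF psf_lborel, where f="\<lambda>j x. indicator {0..1::real} x * indicator (A j) x"])
       (use Ab in measurable)
  also have "\<dots> = (\<Prod>j\<in>UNIV. emeasure UU (A j))"
    unfolding UU_def by (intro prod.cong refl, subst emeasure_density) (auto simp: Ab)
  finally show "emeasure (density ?L (\<lambda>f. \<Prod>j\<in>UNIV. indicator {0..1::real} (f j))) (PiE UNIV A) = (\<Prod>j\<in>UNIV. emeasure UU (A j))" .
qed

lemma transfer:
  fixes E :: "(real^'n::finite) set"
  assumes E: "E \<in> sets borel" "E \<subseteq> unit_cube"
  shows "emeasure (PJ UNIV) (fib E x UNIV) = emeasure lborel E"
proof -
  let ?L = "PiM UNIV (\<lambda>_::'n. lborel)"
  let ?h = "\<lambda>f. \<Prod>j\<in>UNIV. indicator {0..1::real} (f j) :: ennreal"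
  have um: "upd x UNIV \<in> borel_measurable ?L" by (rule upd_measurable_gen) simp
  have X: "fib E x UNIV = upd x UNIV -` E \<inter> space ?L" by (auto simp: fib_def space_PiM)
  have Xs: "fib E x UNIV \<in> sets ?L" unfolding X by (rule measurable_sets[OF um E(1)])
  have "emeasure (PJ UNIV) (fib E x UNIV) = emeasure (density ?L ?h) (fib E x UNIV)"
    by (subst PiM_UU) (rule refl)
  also have "\<dots> = (\<integral>\<^sup>+f. ?h f * indicator (fib E x UNIV) f \<partial>?L)"
    by (rule emeasure_density[OF h_meas Xs])
  also have "\<dots> = (\<integral>\<^sup>+f. indicator (fib E x UNIV) f \<partial>?L)"
  proof (rule nn_integral_cong)
    fix f :: "'n \<Rightarrow> real"
    show "?h f * indicator (fib E x UNIV) f = indicator (fib E x UNIV) f"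
    proof (cases "f \<in> fib E x UNIV")
      case True
      then have "upd x UNIV f \<in> unit_cube" using E(2) by (auto simp: fib_def)
      then have "f j \<in> {0..1}" for j by (auto simp: unit_cube_def upd_def)
      then show ?thesis using True by simp
    qed simp
  qed
  also have "\<dots> = emeasure ?L (fib E x UNIV)" by (rule nn_integral_indicator[OF Xs])
  also have "\<dots> = emeasure (distr ?L borel (upd x UNIV)) E"
    by (subst emeasure_distr[OF um]) (simp_all add: X E)
  also have "\<dots> = emeasure lborel E" by (simp add: lborel_vec)
  finally show ?thesis .
qed


lemma cc_le: "0 \<le> l \<Longrightarrow> cc l \<le> exp (l^2/4)"
proof -
  assume l: "0 \<le> l"
  define e where "e = exp l"
  have e: "0 < e" by (simp add: e_def)
  have H: "-l * (1/2) + ln (1 + 1/2 * (exp l - 1)) \<le> l^2/8"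
    using Hoeffdings_lemma_aux[of l "1/2"] l by simp
  have eq: "ln ((1 + e)/2) = ln (1 + 1/2 * (exp l - 1))"
    by (rule arg_cong[where f=ln]) (simp add: e_def field_simps)
  have "ln ((1 + e)/2) \<le> l/2 + l^2/8" using H unfolding eq by linarith
  then have "exp (ln ((1 + e)/2)) \<le> exp (l/2 + l^2/8)" by simp
  then have h: "(1 + e)/2 \<le> exp (l/2 + l^2/8)" using e by simp
  have "((1 + e)/2)^2 \<le> (exp (l/2 + l^2/8))^2" using h e by (intro power_mono) auto
  also have "(exp (l/2 + l^2/8))^2 = exp ((l/2 + l^2/8) + (l/2 + l^2/8))" by (simp only: power2_eq_square mult_exp_exp)
  also have "(l/2 + l^2/8) + (l/2 + l^2/8) = l + l^2/4" by simp
  also have "exp (l + l^2/4) = e * exp (l^2/4)" by (simp only: e_def mult_exp_exp)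
  finally have "((1 + e)/2)^2 / e \<le> exp (l^2/4)" using e by (simp add: field_simps)
  moreover have "cc l = ((1 + e)/2)^2 / e" by (simp add: cc_def e_def power2_eq_square field_simps)
  ultimately show ?thesis by simp
qed

lemma cc_pow_bound:
  fixes ss nn :: real and N :: nat
  assumes "0 < ss" "nn = real N" "0 < N" "l = 2 * ss / nn"
  shows "cc l ^ N * exp (-(l * ss)) \<le> exp (- (ss^2) / nn)"
proof -
  have l: "0 \<le> l" using assms by simp
  have "cc l ^ N \<le> exp (l^2/4) ^ N" using cc_le[OF l] cc_nonneg by (intro power_mono) auto
  also have "\<dots> = exp (nn * (l^2/4))" unfolding assms(2) by (rule exp_of_nat_mult[symmetric])
  finally have "cc l ^ N * exp (-(l * ss)) \<le> exp (nn * (l^2/4)) * exp (-(l * ss))" by simp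
  also have "\<dots> = exp (nn * (l^2/4) - l * ss)" by (rule trans[OF mult_exp_exp]) simp
  also have "nn * (l^2/4) - l * ss = - (ss^2) / nn" using assms by (simp add: power2_eq_square field_simps)
  finally show ?thesis .
qed

lemma GG_attained:
  assumes "finite J"
  shows "\<exists>S\<in>Pow J. GG l K J z = (if z \<in> TT K S then ennreal (exp (l * real (card S))) else \<infinity>)"
proof -
  define h where "h S = (if z \<in> TT K S then ennreal (exp (l * real (card S))) else \<infinity>)" for S
  have fin: "finite (h ` Pow J)" "h ` Pow J \<noteq> {}" using assms by auto
  have "GG l K J z = Inf (h ` Pow J)" unfolding GG_def h_def by simp
  also have "\<dots> = Min (h ` Pow J)" using Min_Inf[OF fin] by simp
  finally show ?thesis using Min_in[OF fin] unfolding h_def by auto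
qed

lemma cube_eq: "(unit_cube :: (real^'n::finite) set) = cbox 0 1"
  by (auto simp: unit_cube_def mem_box_cart)

lemma measure_cube: "measure lborel (unit_cube :: (real^'n::finite) set) = 1"
  unfolding cube_eq by (subst content_cbox_cart) (auto simp: interval_ne_empty_cart)

lemma emeasure_cube: "emeasure lborel (unit_cube :: (real^'n::finite) set) = 1"
  using emeasure_eq_measure2[OF fmeasurable_cbox[of "0::real^'n" 1]] measure_cube unfolding cube_eq by simp


lemma sets_fib_borel: "E \<in> sets borel \<Longrightarrow> fib E x J \<in> sets (PiM J (\<lambda>_. UU))"
  unfolding fib_eq by (rule measurable_sets[OF upd_measurable])

lemma transfer_measure:
  fixes E :: "(real^'n::finite) set"
  assumes "E \<in> sets borel" "E \<subseteq> unit_cube"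
  shows "measure (PJ UNIV) (fib E x UNIV) = measure lborel E"
  unfolding measure_def using transfer[OF assms] by simp

lemma closed_cube: "closed (unit_cube :: (real^'n::finite) set)"
  unfolding cube_eq by (rule closed_cbox)

lemma Cbound:
  fixes T :: "(real^'n::finite) set" and s l :: real
  assumes T: "compact T" "T \<subseteq> unit_cube" "0 < measure lborel T" and s: "0 < s"
    and l: "l = 2 * s / real CARD('n)"
  shows "1 - exp (- (s^2) / real CARD('n)) / measure lborel T
          \<le> measure lborel {z \<in> unit_cube. GG l T UNIV z \<le> ennreal (exp (l * s))}"
proof -
  let ?P = "PJ (UNIV::'n set)"
  interpret P: prob_space ?P by (rule prob_PJ)
  define C where "C = {z \<in> unit_cube. GG l T UNIV z \<le> ennreal (exp (l * s))}"
  define vT where "vT = measure lborel T"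
  define Q where "Q = exp (- (s^2) / real CARD('n))"
  have vT: "0 < vT" using T by (simp add: vT_def)
  have Tb: "T \<in> sets borel" using T(1) by (simp add: compact_imp_closed borel_closed)
  have cubeb: "unit_cube \<in> sets borel" using closed_cube by (rule borel_closed)
  have GGm[measurable]: "GG l T UNIV \<in> borel_measurable borel" using T(1) by (simp add: GG_measurable)
  have M1: "{z \<in> space borel. GG l T UNIV z \<le> ennreal (exp (l * s))} \<in> sets borel" by measurable
  have Ceq: "C = unit_cube \<inter> {z \<in> space borel. GG l T UNIV z \<le> ennreal (exp (l * s))}"
    by (auto simp: C_def)
  have Cb: "C \<in> sets borel" unfolding Ceq by (rule sets.Int[OF cubeb M1])
  have Csub: "C \<subseteq> unit_cube" by (auto simp: C_def)
  have mT: "measure ?P (fib T 0 UNIV) = vT" unfolding vT_def by (rule transfer_measure[OF Tb T(2)])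
  have mCube: "measure ?P (fib unit_cube 0 UNIV) = 1"
    by (rule trans[OF transfer_measure[OF cubeb order_refl] measure_cube])
  have mC: "measure ?P (fib C 0 UNIV) = measure lborel C" by (rule transfer_measure[OF Cb Csub])
  have int: "(\<integral>\<^sup>+f. GG l T UNIV (upd 0 UNIV f) \<partial>?P) \<le> ennreal (cc l ^ CARD('n) / vT)"
    using claim[of "UNIV::'n set" l, rule_format, OF _ T(1,2), of 0] mT vT by simp
  have gm[measurable]: "(\<lambda>f. GG l T UNIV (upd 0 UNIV f)) \<in> borel_measurable ?P"
    by (rule measurable_compose[OF upd_measurable GGm])
  define Y where "Y = {f \<in> space ?P. ennreal (exp (l * s)) < GG l T UNIV (upd 0 UNIV f)}"
  have Ym: "Y \<in> sets ?P" unfolding Y_def by measurable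
  have "ennreal (exp (l * s)) * emeasure ?P Y = (\<integral>\<^sup>+f. ennreal (exp (l * s)) * indicator Y f \<partial>?P)"
    by (rule nn_integral_cmult_indicator[OF Ym, symmetric])
  also have "\<dots> \<le> (\<integral>\<^sup>+f. GG l T UNIV (upd 0 UNIV f) \<partial>?P)"
  proof (rule nn_integral_mono)
    fix f assume "f \<in> space ?P"
    show "ennreal (exp (l * s)) * indicator Y f \<le> GG l T UNIV (upd 0 UNIV f)"
      by (cases "f \<in> Y") (auto simp: Y_def less_imp_le)
  qed
  also have "\<dots> \<le> ennreal (cc l ^ CARD('n) / vT)" by (rule int)
  finally have "ennreal (exp (l * s) * measure ?P Y) \<le> ennreal (cc l ^ CARD('n) / vT)"
    by (simp add: P.emeasure_eq_measure ennreal_mult)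
  then have "exp (l * s) * measure ?P Y \<le> cc l ^ CARD('n) / vT"
    using vT cc_nonneg by (subst (asm) ennreal_le_iff) auto
  then have "measure ?P Y * exp (l * s) \<le> cc l ^ CARD('n) / vT" by (simp add: mult.commute)
  then have "measure ?P Y \<le> (cc l ^ CARD('n) / vT) / exp (l * s)"
    by (subst pos_le_divide_eq) simp_all
  also have "(cc l ^ CARD('n) / vT) / exp (l * s) = cc l ^ CARD('n) * exp (- (l * s)) / vT"
    by (simp add: exp_minus field_simps)
  also have "\<dots> \<le> Q / vT"
    using cc_pow_bound[OF s refl _ l] vT by (intro divide_right_mono) (auto simp: Q_def)
  finally have mY: "measure ?P Y \<le> Q / vT" .
  have sub: "fib unit_cube 0 UNIV - Y \<subseteq> fib C 0 UNIV"
  proof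
    fix f assume f: "f \<in> fib unit_cube 0 UNIV - Y"
    then have "f \<in> space ?P" "upd 0 UNIV f \<in> unit_cube" by (auto simp: fib_def)
    moreover have "GG l T UNIV (upd 0 UNIV f) \<le> ennreal (exp (l * s))"
      using f \<open>f \<in> space ?P\<close> unfolding Y_def by (simp add: not_less)
    ultimately show "f \<in> fib C 0 UNIV" by (simp add: fib_def C_def)
  qed
  have "1 \<le> measure ?P ((fib unit_cube 0 UNIV - Y) \<union> Y)"
    unfolding mCube[symmetric]
    by (rule P.finite_measure_mono) (auto intro!: sets.Un sets.Diff Ym sets_fib_borel cubeb)
  also have "\<dots> \<le> measure ?P (fib unit_cube 0 UNIV - Y) + measure ?P Y"
    by (rule measure_Un_le) (auto intro!: sets.Diff Ym sets_fib_borel cubeb)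
  also have "measure ?P (fib unit_cube 0 UNIV - Y) \<le> measure ?P (fib C 0 UNIV)"
    by (rule P.finite_measure_mono[OF sub sets_fib_borel[OF Cb]])
  finally have "1 - measure ?P Y \<le> measure lborel C" using mC by simp
  then show ?thesis using mY unfolding C_def[symmetric] vT_def[symmetric] Q_def[symmetric] by simp
qed


lemma KL:
  fixes A :: "(real^'n::finite) set" and s :: real
  assumes A: "A \<subseteq> unit_cube" "A \<in> sets lebesgue" "0 < measure lebesgue A" and s0: "0 \<le> s"
  shows "\<exists>C\<in>sets lebesgue. C \<subseteq> {z \<in> unit_cube. \<exists>y\<in>A. real (card {j. z$j \<noteq> y$j}) \<le> s} \<and>
           1 - exp (- (s^2) / real CARD('n)) / measure lebesgue A \<le> measure lebesgue C"
proof (cases "s = 0")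
  case True
  define \<alpha> where "\<alpha> = measure lebesgue A"
  have \<alpha>: "0 < \<alpha>" using A(3) by (simp add: \<alpha>_def)
  have "1 - 1/\<alpha> \<le> \<alpha>"
  proof -
    have "0 \<le> (\<alpha> - 1)^2 + \<alpha>" using \<alpha> by simp
    then have "\<alpha> - 1 \<le> \<alpha> * \<alpha>" by (simp add: power2_eq_square algebra_simps)
    then show ?thesis using \<alpha> by (simp add: field_simps)
  qed
  moreover have "A \<subseteq> {z \<in> unit_cube. \<exists>y\<in>A. real (card {j. z$j \<noteq> y$j}) \<le> s}"
  proof
    fix z assume z: "z \<in> A"
    have "{j. z$j \<noteq> z$j} = {}" by simp
    then show "z \<in> {z \<in> unit_cube. \<exists>y\<in>A. real (card {j. z$j \<noteq> y$j}) \<le> s}"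
      using z A(1) True by auto
  qed
  ultimately show ?thesis using A(2) True by (intro bexI[of _ A]) (auto simp: \<alpha>_def)
next
  case False
  then have s: "0 < s" using s0 by simp
  define n where "n = real CARD('n)"
  define l where "l = 2 * s / n"
  define \<alpha> where "\<alpha> = measure lebesgue A"
  define Q where "Q = exp (- (s^2) / n)"
  have n: "0 < n" by (simp add: n_def)
  have l: "0 < l" using s n by (simp add: l_def)
  have \<alpha>: "0 < \<alpha>" using A(3) by (simp add: \<alpha>_def)
  have Q: "0 < Q" by (simp add: Q_def)
  have Afm: "A \<in> fmeasurable lebesgue"
    by (rule fmeasurableI2[OF lmeasurable_cbox[of "0::real^'n" 1]]) (use A in \<open>auto simp: cube_eq\<close>)
  have "\<exists>T. closed T \<and> T \<subseteq> A \<and> emeasure lebesgue (A - T) < ennreal (inverse (real (Suc m)))" for m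
  proof -
    have e: "0 < inverse (real (Suc m))" by simp
    obtain T where "closed T" "T \<subseteq> A" "A - T \<in> lmeasurable"
      "emeasure lebesgue (A - T) < ennreal (inverse (real (Suc m)))"
      by (rule sets_lebesgue_inner_closed[OF A(2) e])
    then show ?thesis by blast
  qed
  then obtain T where T: "\<And>m. closed (T m)" "\<And>m. T m \<subseteq> A"
    "\<And>m. emeasure lebesgue (A - T m) < ennreal (inverse (real (Suc m)))" by metis
  have Tcube: "T m \<subseteq> unit_cube" for m using T(2) A(1) by blast
  have Tc: "compact (T m)" for m
    unfolding compact_eq_bounded_closed
    using T(1) Tcube bounded_subset[OF bounded_cbox[of "0::real^'n" 1]] by (auto simp: cube_eq)
  have Tb: "T m \<in> sets borel" for m using T(1) by (rule borel_closed)
  have Tl: "T m \<in> sets lebesgue" for m using Tb by simp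
  have vT_eq: "measure lebesgue (T m) = measure lborel (T m)" for m using Tb by simp
  have vT_gt: "\<alpha> - inverse (real (Suc m)) < measure lborel (T m)" for m
  proof -
    have fm: "A - T m \<in> fmeasurable lebesgue"
      by (rule fmeasurableI2[OF Afm]) (use A(2) Tl in auto)
    have "ennreal (measure lebesgue (A - T m)) < ennreal (inverse (real (Suc m)))"
      using T(3)[of m] by (simp add: emeasure_eq_measure2[OF fm])
    then have "measure lebesgue (A - T m) < inverse (real (Suc m))"
      by (simp add: ennreal_less_iff)
    moreover have "measure lebesgue (A - T m) = \<alpha> - measure lebesgue (T m)"
      unfolding \<alpha>_def using Afm by (intro measure_Diff) (auto simp: fmeasurable_def A(2) Tl T(2))
    ultimately show ?thesis using vT_eq[of m] by simp
  qed
  define C where "C m = {z \<in> unit_cube. GG l (T m) UNIV z \<le> ennreal (exp (l * s))}" for m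
  have cubeb: "unit_cube \<in> sets borel" using closed_cube by (rule borel_closed)
  have Cb: "C m \<in> sets borel" for m
  proof -
    have GGm[measurable]: "GG l (T m) UNIV \<in> borel_measurable borel" using Tc by (simp add: GG_measurable)
    have M1: "{z \<in> space borel. GG l (T m) UNIV z \<le> ennreal (exp (l * s))} \<in> sets borel" by measurable
    have Ceq: "C m = unit_cube \<inter> {z \<in> space borel. GG l (T m) UNIV z \<le> ennreal (exp (l * s))}"
      by (auto simp: C_def)
    show ?thesis unfolding Ceq by (rule sets.Int[OF cubeb M1])
  qed
  have Csub: "C m \<subseteq> {z \<in> unit_cube. \<exists>y\<in>A. real (card {j. z$j \<noteq> y$j}) \<le> s}" for m
  proof
    fix z assume z: "z \<in> C m"
    obtain S where S: "S \<in> Pow UNIV" and GS: "GG l (T m) UNIV z = (if z \<in> TT (T m) S then ennreal (exp (l * real (card S))) else \<infinity>)"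
      by (rule bexE[OF GG_attained[of "UNIV::'n set" l "T m" z]]) simp
    have le: "GG l (T m) UNIV z \<le> ennreal (exp (l * s))" using z by (simp add: C_def)
    have zT: "z \<in> TT (T m) S"
    proof (rule ccontr)
      assume "z \<notin> TT (T m) S"
      then have "GG l (T m) UNIV z = \<infinity>" using GS by simp
      then show False using le by (simp add: top_unique)
    qed
    then have "ennreal (exp (l * real (card S))) \<le> ennreal (exp (l * s))" using GS le by simp
    then have "exp (l * real (card S)) \<le> exp (l * s)" by (simp add: ennreal_le_iff)
    then have cS: "real (card S) \<le> s" using l by simp
    from zT obtain y where y: "y \<in> T m" "\<forall>j. j \<notin> S \<longrightarrow> y $ j = z $ j" unfolding TT_def by blast
    have "{j. z$j \<noteq> y$j} \<subseteq> S" using y(2) by auto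
    then have "card {j. z$j \<noteq> y$j} \<le> card S" by (intro card_mono) auto
    then have "real (card {j. z$j \<noteq> y$j}) \<le> s" using cS by linarith
    moreover have "z \<in> unit_cube" using z by (simp add: C_def)
    moreover have "y \<in> A" using y(1) T(2) by blast
    ultimately show "z \<in> {z \<in> unit_cube. \<exists>y\<in>A. real (card {j. z$j \<noteq> y$j}) \<le> s}"
      by blast
  qed
  define CC where "CC = (\<Union>m. C m)"
  have CCb: "CC \<in> sets borel" unfolding CC_def by (rule sets.countable_UN) (use Cb in blast)
  have CCsub: "CC \<subseteq> unit_cube" unfolding CC_def C_def by auto
  have CCf: "CC \<in> fmeasurable lborel"
    by (rule fmeasurableI2[OF fmeasurable_cbox[of "0::real^'n" 1]]) (use CCsub CCb in \<open>auto simp: cube_eq\<close>)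
  have mono: "measure lborel (C m) \<le> measure lborel CC" for m
    by (rule measure_mono_fmeasurable[OF _ _ CCf]) (use Cb in \<open>auto simp: CC_def\<close>)
  have bound: "1 - Q/\<alpha> \<le> measure lborel CC"
  proof (rule ccontr)
    assume "\<not> 1 - Q/\<alpha> \<le> measure lborel CC"
    define d where "d = 1 - Q/\<alpha> - measure lborel CC"
    have d: "0 < d" using \<open>\<not> 1 - Q/\<alpha> \<le> measure lborel CC\<close> by (simp add: d_def)
    define \<gamma> where "\<gamma> = Q / (Q/\<alpha> + d)"
    have qd: "0 < Q/\<alpha> + d" using Q \<alpha> d by (simp add: add_pos_pos)
    have \<gamma>0: "0 < \<gamma>" using Q qd by (simp add: \<gamma>_def)
    have "Q < \<alpha> * (Q/\<alpha> + d)" using \<alpha> d by (simp add: algebra_simps)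
    then have \<gamma>\<alpha>: "\<gamma> < \<alpha>" using qd by (simp add: \<gamma>_def pos_divide_less_eq)
    obtain m where m: "inverse (real (Suc m)) < \<alpha> - \<gamma>" using reals_Archimedean[of "\<alpha> - \<gamma>"] \<gamma>\<alpha> by auto
    have vT: "\<gamma> < measure lborel (T m)" using vT_gt[of m] m by linarith
    have vTpos: "0 < measure lborel (T m)" using \<gamma>0 vT by linarith
    have "1 - Q / measure lborel (T m) \<le> measure lborel (C m)"
      unfolding C_def Q_def n_def by (rule Cbound[OF Tc Tcube vTpos s]) (simp add: l_def n_def)
    moreover have "Q / measure lborel (T m) < Q / \<gamma>"
      using vT \<gamma>0 Q by (intro divide_strict_left_mono) auto
    moreover have "Q / \<gamma> = Q/\<alpha> + d" using Q qd by (simp add: \<gamma>_def)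
    ultimately have "1 - Q/\<alpha> - d < measure lborel CC" using mono[of m] by linarith
    then show False by (simp add: d_def)
  qed
  show ?thesis
  proof (intro bexI[of _ CC] conjI)
    show "CC \<in> sets lebesgue" using CCb by simp
    show "CC \<subseteq> {z \<in> unit_cube. \<exists>y\<in>A. real (card {j. z$j \<noteq> y$j}) \<le> s}"
      unfolding CC_def using Csub by blast
    show "1 - exp (- (s^2) / real CARD('n)) / measure lebesgue A \<le> measure lebesgue CC"
      using bound CCb by (simp add: Q_def n_def \<alpha>_def)
  qed
qed


lemma powr_sum_le:
  fixes z y :: "real^'n::finite" and p :: real
  assumes "z \<in> unit_cube" "y \<in> unit_cube" "0 < p"
  shows "(\<Sum>i\<in>UNIV. \<bar>(z - y) $ i\<bar> powr p) \<le> real (card {j. z$j \<noteq> y$j})"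
proof -
  let ?D = "{j. z$j \<noteq> y$j}"
  have "(\<Sum>i\<in>UNIV. \<bar>(z - y) $ i\<bar> powr p) = (\<Sum>i\<in>?D. \<bar>(z - y) $ i\<bar> powr p)"
    by (rule sum.mono_neutral_right) auto
  also have "\<dots> \<le> (\<Sum>i\<in>?D. 1)"
  proof (rule sum_mono)
    fix i
    have "0 \<le> z $ i" "z $ i \<le> 1" "0 \<le> y $ i" "y $ i \<le> 1" using assms(1,2) by (auto simp: unit_cube_def)
    then have "\<bar>(z - y) $ i\<bar> \<le> 1" by (simp add: abs_le_iff)
    then have "\<bar>(z - y) $ i\<bar> powr p \<le> 1 powr p" using assms(3) by (intro powr_mono2) auto
    then show "\<bar>(z - y) $ i\<bar> powr p \<le> 1" by simp
  qed
  finally show ?thesis by simp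
qed

theorem lemma4:
  fixes A :: "(real ^ 'n) set" and p eps :: real
  assumes "A \<subseteq> unit_cube"
    and "A \<in> sets lebesgue"
    and "measure lebesgue A > 0"
    and "p \<ge> 0"
    and "eps \<ge> 0"
  shows "(p > 0 \<longrightarrow> (\<exists>C\<in>sets lebesgue. C \<subseteq> expansion A eps p \<and>
            measure lebesgue C \<ge> 1 - exp (- (eps powr (2 * p)) / real CARD('n)) / measure lebesgue A))
       \<and> (p = 0 \<longrightarrow> (\<exists>C\<in>sets lebesgue. C \<subseteq> expansion A eps p \<and>
            measure lebesgue C \<ge> 1 - exp (- (eps ^ 2) / real CARD('n)) / measure lebesgue A))"
proof (intro conjI impI)
  assume p: "p > 0"
  have s0: "0 \<le> eps powr p" by simp
  obtain C where C: "C \<in> sets lebesgue"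
    "C \<subseteq> {z \<in> unit_cube. \<exists>y\<in>A. real (card {j. z$j \<noteq> y$j}) \<le> eps powr p}"
    "1 - exp (- ((eps powr p)^2) / real CARD('n)) / measure lebesgue A \<le> measure lebesgue C"
    using KL[OF assms(1,2,3) s0] by blast
  have sub: "C \<subseteq> expansion A eps p"
  proof
    fix z assume "z \<in> C"
    then obtain y where z: "z \<in> unit_cube" and y: "y \<in> A" and cd: "real (card {j. z$j \<noteq> y$j}) \<le> eps powr p"
      using C(2) by blast
    have yc: "y \<in> unit_cube" using y assms(1) by blast
    have "(\<Sum>i\<in>UNIV. \<bar>(z - y) $ i\<bar> powr p) \<le> eps powr p"
      using powr_sum_le[OF z yc p] cd by linarith
    then have "(\<Sum>i\<in>UNIV. \<bar>(z - y) $ i\<bar> powr p) powr (1/p) \<le> (eps powr p) powr (1/p)"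
      using p by (intro powr_mono2) (auto intro: sum_nonneg)
    also have "(eps powr p) powr (1/p) = eps"
      using p assms(5) by (simp add: powr_powr powr_one)
    finally have "dist_p p z y \<le> eps" using p by (simp add: dist_p_def pnorm_def)
    then show "z \<in> expansion A eps p" using z y by (auto simp: expansion_def)
  qed
  have "eps powr (2 * p) = (eps powr p)^2"
    by (simp add: power2_eq_square powr_add[symmetric])
  then show "\<exists>C\<in>sets lebesgue. C \<subseteq> expansion A eps p \<and>
            measure lebesgue C \<ge> 1 - exp (- (eps powr (2 * p)) / real CARD('n)) / measure lebesgue A"
    using C(1,3) sub by auto
next
  assume p: "p = 0"
  obtain C where C: "C \<in> sets lebesgue"
    "C \<subseteq> {z \<in> unit_cube. \<exists>y\<in>A. real (card {j. z$j \<noteq> y$j}) \<le> eps}"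
    "1 - exp (- (eps^2) / real CARD('n)) / measure lebesgue A \<le> measure lebesgue C"
    using KL[OF assms(1,2,3,5)] by blast
  have sub: "C \<subseteq> expansion A eps p"
  proof
    fix z assume "z \<in> C"
    then obtain y where z: "z \<in> unit_cube" and y: "y \<in> A" and cd: "real (card {j. z$j \<noteq> y$j}) \<le> eps"
      using C(2) by blast
    have "{i. (z - y) $ i \<noteq> 0} = {j. z$j \<noteq> y$j}" by auto
    then have "dist_p p z y \<le> eps" using p cd by (simp add: dist_p_def pnorm_def)
    then show "z \<in> expansion A eps p" using z y by (auto simp: expansion_def)
  qed
  then show "\<exists>C\<in>sets lebesgue. C \<subseteq> expansion A eps p \<and>
            measure lebesgue C \<ge> 1 - exp (- (eps ^ 2) / real CARD('n)) / measure lebesgue A"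
    using C(1,3) by auto
qed

end
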